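(* Let $(A,\mathit{Con},\mid\!\sim)$ be an abstract nonmonotonic system. For every $X\in\mathit{Con}$, $$\bigcap\{\widetilde{Y}\mid Y\in\mathit{Con},\ Y\subseteq X\subseteq\widetilde{Y}\}=\widetilde{X}.$$
   Context: An abstract nonmonotonic system is a triple $(A,\mathit{Con},\mid\!\sim)$ where $\mathit{Con}$ is a collection of finite subsets of $A$ and $\mid\!\sim\ \subseteq\mathit{Con}\times\mathit{Con}$, satisfying: (1) $X\subseteq Y\in\mathit{Con}\Rightarrow X\in\mathit{Con}$; (2) $a\in A\Rightarrow\{a\}\in\mathit{Con}$; (3) $X\mid\!\sim T\Rightarrow X\cup T\in\mathit{Con}$; (4) $Y\subseteq X\Rightarrow X\mid\!\sim Y$; (5) $X\mid\!\sim T$ and $T\cup X\mid\!\sim Y$ imply $X\mid\!\sim Y$; (6) $X\mid\!\sim Y$ and $X\mid\!\sim Z$ imply $X\mid\!\sim Y\cup Z$. For $X\in\mathit{Con}$, $\widetilde{X}:=\{t\in A\mid X\mid\!\sim\{t\}\}$. *)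

theory Defs
  imports Main
begin

definition ans :: "'a set \<Rightarrow> 'a set set \<Rightarrow> ('a set \<Rightarrow> 'a set \<Rightarrow> bool) \<Rightarrow> bool" where
  "ans A Con R \<longleftrightarrow>
     (\<forall>X\<in>Con. finite X \<and> X \<subseteq> A) \<and>
     (\<forall>X Y. X \<subseteq> Y \<and> Y \<in> Con \<longrightarrow> X \<in> Con) \<and>
     (\<forall>a\<in>A. {a} \<in> Con) \<and>
     (\<forall>X T. R X T \<longrightarrow> X \<in> Con \<and> T \<in> Con) \<and>
     (\<forall>X T. R X T \<longrightarrow> X \<union> T \<in> Con) \<and>
     (\<forall>X Y. X \<in> Con \<and> Y \<subseteq> X \<longrightarrow> R X Y) \<and>
     (\<forall>X T Y. R X T \<and> R (T \<union> X) Y \<longrightarrow> R X Y) \<and>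
     (\<forall>X Y Z. R X Y \<and> R X Z \<longrightarrow> R X (Y \<union> Z))"

definition tilde :: "'a set \<Rightarrow> ('a set \<Rightarrow> 'a set \<Rightarrow> bool) \<Rightarrow> 'a set \<Rightarrow> 'a set" where
  "tilde A R X = {t \<in> A. R X {t}}"

end

theory Submission
  imports Defs
begin

lemma fin_conj:
  assumes "ans A Con R" "Y \<in> Con" "finite S"
  shows "S \<subseteq> tilde A R Y \<Longrightarrow> R Y S"
  using assms(3)
proof (induction S rule: finite_induct)
  case empty
  have "\<forall>X Y. X \<in> Con \<and> Y \<subseteq> X \<longrightarrow> R X Y" using assms(1) unfolding ans_def by (elim conjE)
  then show ?case using assms(2) by blast
next
  case (insert x F)
  then have "R Y {x}" "R Y F" unfolding tilde_def by auto
  moreover have "\<forall>X Y Z. R X Y \<and> R X Z \<longrightarrow> R X (Y \<union> Z)" using assms(1) unfolding ans_def by (elim conjE)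
  ultimately have "R Y ({x} \<union> F)" by blast
  then show ?case by simp
qed

theorem lemma2:
  assumes "ans A Con R" and "X \<in> Con"
  shows "\<Inter> {tilde A R Y | Y. Y \<in> Con \<and> Y \<subseteq> X \<and> X \<subseteq> tilde A R Y} = tilde A R X"
proof
  have XA0: "\<forall>X\<in>Con. finite X \<and> X \<subseteq> A" using assms(1) unfolding ans_def by (elim conjE)
  have XA: "finite X" "X \<subseteq> A" using XA0 assms(2) by blast+
  have "X \<subseteq> tilde A R X"
  proof
    fix x assume "x \<in> X"
    moreover have "\<forall>X Y. X \<in> Con \<and> Y \<subseteq> X \<longrightarrow> R X Y" using assms(1) unfolding ans_def by (elim conjE)
    ultimately have "R X {x}" using assms(2) by blast
    then show "x \<in> tilde A R X" using XA \<open>x \<in> X\<close> unfolding tilde_def by auto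
  qed
  then show "\<Inter> {tilde A R Y | Y. Y \<in> Con \<and> Y \<subseteq> X \<and> X \<subseteq> tilde A R Y} \<subseteq> tilde A R X"
    using assms(2) by blast
next
  have XA: "finite X" using assms unfolding ans_def by (elim conjE) blast
  show "tilde A R X \<subseteq> \<Inter> {tilde A R Y | Y. Y \<in> Con \<and> Y \<subseteq> X \<and> X \<subseteq> tilde A R Y}"
  proof (rule subsetI, rule InterI)
    fix t S assume t: "t \<in> tilde A R X"
      and "S \<in> {tilde A R Y | Y. Y \<in> Con \<and> Y \<subseteq> X \<and> X \<subseteq> tilde A R Y}"
    then obtain Y where Y: "S = tilde A R Y" "Y \<in> Con" "Y \<subseteq> X" "X \<subseteq> tilde A R Y" by blast
    have "R Y X" using fin_conj[OF assms(1) Y(2) XA Y(4)] .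
    moreover have "X \<union> Y = X" using Y(3) by blast
    moreover have "R X {t}" "t \<in> A" using t unfolding tilde_def by auto
    ultimately have h: "R Y X" "R (X \<union> Y) {t}" by simp_all
    have cut: "\<forall>X T Y. R X T \<and> R (T \<union> X) Y \<longrightarrow> R X Y"
      using assms(1) unfolding ans_def by (elim conjE)
    have "R Y {t}" using cut h by blast
    then show "t \<in> S" using Y(1) \<open>t \<in> A\<close> unfolding tilde_def by auto
  qed
qed

end
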